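(* Fix an odd prime $p$. There are constants $c_p>0$ and $r_0(p)<\infty$ such that, for every $h=2m\ge2$ and every $r\ge\max\{h+1,r_0(p)\}$, the half-lazy PA-PRA walk $Q$ on $V_r(\mathsf H)$ (with $\dim W=h$) satisfies \[ \tau_{\mathrm{mix}}(Q)\ge c_p\max\left\{r\log r,\ \frac{r(h+1)}{\log(er)}\right\}. \]
   Context: Let $p$ be an odd prime, $W$ a vector space of dimension $h=2m$ over $\mathbb F_p$ with a nondegenerate alternating bilinear form $\omega$. The Heisenberg group $\mathsf H=W\times\mathbb F_p$ has multiplication $(v,z)(w,t)=(v+w,\,z+t+\tfrac12\omega(v,w))$, where $\tfrac12$ is the inverse of $2$ in $\mathbb F_p$. Let $V_r(\mathsf H)=\{(g_1,\dots,g_r)\in\mathsf H^r:\langle g_1,\dots,g_r\rangle=\mathsf H\}$ and $\pi$ the uniform measure on it. For distinct $i,j\in[r]$ and $a\in\mathbb F_p$, $T^R_{j\to i,a}$ replaces $g_i$ by $g_ig_j^a$ and $T^L_{j\to i,a}$ replaces $g_i$ by $g_j^ag_i$. The PA-PRA kernel is $Pf(g)=\frac1{2pr(r-1)}\sum_{i\ne j}\sum_{a\in\mathbb F_p}[f(T^R_{j\to i,a}g)+f(T^L_{j\to i,a}g)]$ and $Q=\frac12(I+P)$. $\tau_{\mathrm{mix}}(Q)=\min\{t\ge0:\max_x\|Q^t(x,\cdot)-\pi\|_{\mathrm{TV}}\le1/4\}$. *)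

theory Defs
  imports Complex_Main "HOL-Library.Extended_Real" "HOL-Computational_Algebra.Primes"
begin

text \<open>The vector space W = F_p^h, realised as integer-valued functions on nat
  with coordinates in {0..<p} below h and 0 from h on.\<close>

definition Wvec :: "nat \<Rightarrow> nat \<Rightarrow> (nat \<Rightarrow> int) set" where
  "Wvec p h = {v. (\<forall>i<h. 0 \<le> v i \<and> v i < int p) \<and> (\<forall>i\<ge>h. v i = 0)}"

definition vadd :: "nat \<Rightarrow> (nat \<Rightarrow> int) \<Rightarrow> (nat \<Rightarrow> int) \<Rightarrow> (nat \<Rightarrow> int)" where
  "vadd p v w = (\<lambda>i. (v i + w i) mod int p)"

text \<open>A nondegenerate alternating bilinear form on W with values in F_p = {0..<p}.
  (Biadditivity over the prime field F_p is the same as F_p-bilinearity.)\<close>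

definition symplectic_form ::
  "nat \<Rightarrow> nat \<Rightarrow> ((nat \<Rightarrow> int) \<Rightarrow> (nat \<Rightarrow> int) \<Rightarrow> int) \<Rightarrow> bool" where
  "symplectic_form p h \<omega> \<longleftrightarrow>
     (\<forall>v\<in>Wvec p h. \<forall>w\<in>Wvec p h. 0 \<le> \<omega> v w \<and> \<omega> v w < int p) \<and>
     (\<forall>u\<in>Wvec p h. \<forall>v\<in>Wvec p h. \<forall>w\<in>Wvec p h.
        \<omega> (vadd p u v) w = (\<omega> u w + \<omega> v w) mod int p \<and>
        \<omega> w (vadd p u v) = (\<omega> w u + \<omega> w v) mod int p) \<and>
     (\<forall>v\<in>Wvec p h. \<omega> v v = 0) \<and>
     (\<forall>v\<in>Wvec p h. v \<noteq> (\<lambda>_. 0) \<longrightarrow> (\<exists>w\<in>Wvec p h. \<omega> v w \<noteq> 0))"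

type_synonym helem = "(nat \<Rightarrow> int) \<times> int"

definition Hset :: "nat \<Rightarrow> nat \<Rightarrow> helem set" where
  "Hset p h = Wvec p h \<times> {0..<int p}"

definition hone :: helem where
  "hone = ((\<lambda>_. 0), 0)"

text \<open>(v,z)(w,t) = (v+w, z+t+ (1/2) omega(v,w)), where 1/2 = (p+1)/2 in F_p.\<close>
definition hmul ::
  "nat \<Rightarrow> ((nat \<Rightarrow> int) \<Rightarrow> (nat \<Rightarrow> int) \<Rightarrow> int) \<Rightarrow> helem \<Rightarrow> helem \<Rightarrow> helem" where
  "hmul p \<omega> g g' = (case g of (v, z) \<Rightarrow> case g' of (w, t) \<Rightarrow>
      (vadd p v w, (z + t + ((int p + 1) div 2) * \<omega> v w) mod int p))"

definition hpow ::
  "nat \<Rightarrow> ((nat \<Rightarrow> int) \<Rightarrow> (nat \<Rightarrow> int) \<Rightarrow> int) \<Rightarrow> helem \<Rightarrow> nat \<Rightarrow> helem" where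
  "hpow p \<omega> g a = (hmul p \<omega> g ^^ a) hone"

text \<open>Subgroup generated by S (in a finite group the generated submonoid is the
  generated subgroup).\<close>
inductive_set hgen ::
  "nat \<Rightarrow> ((nat \<Rightarrow> int) \<Rightarrow> (nat \<Rightarrow> int) \<Rightarrow> int) \<Rightarrow> helem set \<Rightarrow> helem set"
  for p \<omega> S where
  one: "hone \<in> hgen p \<omega> S"
| step: "x \<in> hgen p \<omega> S \<Longrightarrow> s \<in> S \<Longrightarrow> hmul p \<omega> x s \<in> hgen p \<omega> S"

text \<open>V_r(H): generating r-tuples, indexed by {0..<r} (default hone outside).\<close>
definition Vr ::
  "nat \<Rightarrow> nat \<Rightarrow> ((nat \<Rightarrow> int) \<Rightarrow> (nat \<Rightarrow> int) \<Rightarrow> int) \<Rightarrow> nat \<Rightarrow> (nat \<Rightarrow> helem) set" where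
  "Vr p h \<omega> r = {g. (\<forall>i<r. g i \<in> Hset p h) \<and> (\<forall>i\<ge>r. g i = hone) \<and>
                     hgen p \<omega> (g ` {..<r}) = Hset p h}"

definition TR ::
  "nat \<Rightarrow> ((nat \<Rightarrow> int) \<Rightarrow> (nat \<Rightarrow> int) \<Rightarrow> int) \<Rightarrow> nat \<Rightarrow> nat \<Rightarrow> nat \<Rightarrow> (nat \<Rightarrow> helem) \<Rightarrow> (nat \<Rightarrow> helem)" where
  "TR p \<omega> j i a g = g(i := hmul p \<omega> (g i) (hpow p \<omega> (g j) a))"

definition TL ::
  "nat \<Rightarrow> ((nat \<Rightarrow> int) \<Rightarrow> (nat \<Rightarrow> int) \<Rightarrow> int) \<Rightarrow> nat \<Rightarrow> nat \<Rightarrow> nat \<Rightarrow> (nat \<Rightarrow> helem) \<Rightarrow> (nat \<Rightarrow> helem)" where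
  "TL p \<omega> j i a g = g(i := hmul p \<omega> (hpow p \<omega> (g j) a) (g i))"

definition Pker ::
  "nat \<Rightarrow> ((nat \<Rightarrow> int) \<Rightarrow> (nat \<Rightarrow> int) \<Rightarrow> int) \<Rightarrow> nat \<Rightarrow> (nat \<Rightarrow> helem) \<Rightarrow> (nat \<Rightarrow> helem) \<Rightarrow> real" where
  "Pker p \<omega> r x y =
     (real (card {(i, j, a). i < r \<and> j < r \<and> i \<noteq> j \<and> a < p \<and> TR p \<omega> j i a x = y})
    + real (card {(i, j, a). i < r \<and> j < r \<and> i \<noteq> j \<and> a < p \<and> TL p \<omega> j i a x = y}))
     / (2 * real p * real r * (real r - 1))"

definition Qker ::
  "nat \<Rightarrow> ((nat \<Rightarrow> int) \<Rightarrow> (nat \<Rightarrow> int) \<Rightarrow> int) \<Rightarrow> nat \<Rightarrow> (nat \<Rightarrow> helem) \<Rightarrow> (nat \<Rightarrow> helem) \<Rightarrow> real" where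
  "Qker p \<omega> r x y = ((if x = y then 1 else 0) + Pker p \<omega> r x y) / 2"

fun Qpow ::
  "nat \<Rightarrow> nat \<Rightarrow> ((nat \<Rightarrow> int) \<Rightarrow> (nat \<Rightarrow> int) \<Rightarrow> int) \<Rightarrow> nat \<Rightarrow> nat \<Rightarrow> (nat \<Rightarrow> helem) \<Rightarrow> (nat \<Rightarrow> helem) \<Rightarrow> real" where
  "Qpow p h \<omega> r 0 x y = (if x = y then 1 else 0)"
| "Qpow p h \<omega> r (Suc t) x y = (\<Sum>z\<in>Vr p h \<omega> r. Qpow p h \<omega> r t x z * Qker p \<omega> r z y)"

definition tv_dist ::
  "nat \<Rightarrow> nat \<Rightarrow> ((nat \<Rightarrow> int) \<Rightarrow> (nat \<Rightarrow> int) \<Rightarrow> int) \<Rightarrow> nat \<Rightarrow> nat \<Rightarrow> (nat \<Rightarrow> helem) \<Rightarrow> real" where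
  "tv_dist p h \<omega> r t x =
     (1/2) * (\<Sum>y\<in>Vr p h \<omega> r. \<bar>Qpow p h \<omega> r t x y - 1 / real (card (Vr p h \<omega> r))\<bar>)"

text \<open>Mixing time (infinity if the set is empty).\<close>
definition mix_time ::
  "nat \<Rightarrow> nat \<Rightarrow> ((nat \<Rightarrow> int) \<Rightarrow> (nat \<Rightarrow> int) \<Rightarrow> int) \<Rightarrow> nat \<Rightarrow> ereal" where
  "mix_time p h \<omega> r =
     Inf {ereal (real t) | t. \<forall>x\<in>Vr p h \<omega> r. tv_dist p h \<omega> r t x \<le> 1/4}"

end

theory Submission
  imports Defs
begin


definition z0 :: "nat \<Rightarrow> int" where "z0 = (\<lambda>_. 0)"

locale heis =
  fixes p h :: nat and \<omega> :: "(nat \<Rightarrow> int) \<Rightarrow> (nat \<Rightarrow> int) \<Rightarrow> int"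
  assumes prime: "prime p" and oddp: "odd p" and sf: "symplectic_form p h \<omega>"
begin

lemma p3: "p \<ge> 3"
proof -
  have "p \<ge> 2" using prime prime_ge_2_nat by blast
  moreover have "p \<noteq> 2" using oddp by auto
  ultimately show ?thesis by linarith
qed

lemma ppos: "p > 0" using p3 by linarith

lemma z0_W: "z0 \<in> Wvec p h" using ppos by (simp add: z0_def Wvec_def)

lemma W_mod: "v \<in> Wvec p h \<Longrightarrow> v i mod int p = v i"
  by (cases "i < h") (auto simp: Wvec_def)

lemma vadd_W: "v \<in> Wvec p h \<Longrightarrow> w \<in> Wvec p h \<Longrightarrow> vadd p v w \<in> Wvec p h"
  using ppos unfolding Wvec_def vadd_def by auto

lemma vadd_z0: "v \<in> Wvec p h \<Longrightarrow> vadd p v z0 = v" "v \<in> Wvec p h \<Longrightarrow> vadd p z0 v = v"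
  by (auto simp: vadd_def z0_def W_mod)

lemma self_double_zero: fixes x :: int assumes "0 \<le> x" "x < int p" "x = (x + x) mod int p" shows "x = 0"
  by (smt (verit) assms(3) div_mod_decomp_int mod_div_trivial mult_eq_0_iff
    nonzero_mult_div_cancel_right)

lemma omega_z0: assumes "v \<in> Wvec p h" shows "\<omega> v z0 = 0" "\<omega> z0 v = 0"
proof -
  have zz: "vadd p z0 z0 = z0" using vadd_z0 z0_W by blast
  have b: "\<omega> (vadd p z0 z0) v = (\<omega> z0 v + \<omega> z0 v) mod int p"
       "\<omega> v (vadd p z0 z0) = (\<omega> v z0 + \<omega> v z0) mod int p"
    using sf assms z0_W unfolding symplectic_form_def by blast+
  have r: "0 \<le> \<omega> z0 v" "\<omega> z0 v < int p" "0 \<le> \<omega> v z0" "\<omega> v z0 < int p"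
    using sf assms z0_W unfolding symplectic_form_def by blast+
  show "\<omega> v z0 = 0" using self_double_zero[of "\<omega> v z0"] b(2) r zz by simp
  show "\<omega> z0 v = 0" using self_double_zero[of "\<omega> z0 v"] b(1) r zz by simp
qed

lemma hone_H: "hone \<in> Hset p h"
  using ppos z0_W unfolding hone_def Hset_def z0_def by auto

lemma hmul_H: "g \<in> Hset p h \<Longrightarrow> g' \<in> Hset p h \<Longrightarrow> hmul p \<omega> g g' \<in> Hset p h"
proof -
  assume a: "g \<in> Hset p h" "g' \<in> Hset p h"
  obtain v z w t where "g = (v, z)" "g' = (w, t)" by fastforce
  then show ?thesis using a ppos vadd_W unfolding Hset_def hmul_def by auto
qed

lemma hmul_hone: assumes "g \<in> Hset p h" shows "hmul p \<omega> g hone = g" "hmul p \<omega> hone g = g"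
proof -
  obtain v z where g: "g = (v, z)" "v \<in> Wvec p h" "0 \<le> z" "z < int p"
    using assms by (auto simp: Hset_def)
  have h1: "hone = (z0, 0)" by (simp add: hone_def z0_def)
  have "hmul p \<omega> g hone = (vadd p v z0, (z + 0 + ((int p + 1) div 2) * \<omega> v z0) mod int p)"
    unfolding h1 g(1) hmul_def by simp
  then show "hmul p \<omega> g hone = g" using g omega_z0[of v] vadd_z0[of v] by simp
  have "hmul p \<omega> hone g = (vadd p z0 v, (0 + z + ((int p + 1) div 2) * \<omega> z0 v) mod int p)"
    unfolding h1 g(1) hmul_def by simp
  then show "hmul p \<omega> hone g = g" using g omega_z0[of v] vadd_z0[of v] by simp
qed

lemma hpow_hone: "hpow p \<omega> hone a = hone"
  by (induction a) (auto simp: hpow_def hmul_hone hone_H)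

end


lemma card_funs:
  fixes n :: nat
  assumes "\<forall>i<n. finite (A i)"
  shows "finite {f. (\<forall>i<n. f i \<in> A i) \<and> (\<forall>i\<ge>n. f i = d)} \<and>
         card {f. (\<forall>i<n. f i \<in> A i) \<and> (\<forall>i\<ge>n. f i = d)} = (\<Prod>i<n. card (A i))"
  using assms
proof (induction n)
  case 0
  have "{f. (\<forall>i<0. f i \<in> A i) \<and> (\<forall>i\<ge>0. f i = d)} = {\<lambda>_. d}" by auto
  then show ?case by simp
next
  case (Suc n)
  let ?S = "\<lambda>n. {f. (\<forall>i<n. f i \<in> A i) \<and> (\<forall>i\<ge>n. f i = d)}"
  have IH: "finite (?S n)" "card (?S n) = (\<Prod>i<n. card (A i))" using Suc by auto
  have eq: "?S (Suc n) = (\<lambda>(f, x). f(n := x)) ` (?S n \<times> A n)"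
  proof (intro set_eqI iffI)
    fix g assume g: "g \<in> ?S (Suc n)"
    then have "g(n := d) \<in> ?S n" "g n \<in> A n" by (auto simp: less_Suc_eq)
    moreover have "g = (\<lambda>(f, x). f(n := x)) (g(n := d), g n)" by simp
    ultimately show "g \<in> (\<lambda>(f, x). f(n := x)) ` (?S n \<times> A n)" by blast
  next
    fix g assume "g \<in> (\<lambda>(f, x). f(n := x)) ` (?S n \<times> A n)"
    then show "g \<in> ?S (Suc n)" by (auto simp: less_Suc_eq)
  qed
  have inj: "inj_on (\<lambda>(f, x). f(n := x)) (?S n \<times> A n)"
  proof (rule inj_onI)
    fix a b assume a: "a \<in> ?S n \<times> A n" "b \<in> ?S n \<times> A n"
      "(\<lambda>(f, x). f(n := x)) a = (\<lambda>(f, x). f(n := x)) b"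
    obtain f x f' x' where ab: "a = (f, x)" "b = (f', x')" by fastforce
    from a ab have e: "f(n := x) = f'(n := x')" and fn: "f n = d" "f' n = d" by auto
    have "x = x'" using fun_cong[OF e, of n] by simp
    moreover have "f = f'"
    proof
      fix i show "f i = f' i" using fun_cong[OF e, of i] fn by (cases "i = n") auto
    qed
    ultimately show "a = b" using ab by simp
  qed
  show ?case
    using IH Suc.prems eq inj by (simp add: card_image card_cartesian_product)
qed

context heis begin

lemma Wvec_alt: "Wvec p h = {f. (\<forall>i<h. f i \<in> {0..<int p}) \<and> (\<forall>i\<ge>h. f i = 0)}"
  by (auto simp: Wvec_def)

lemma Wvec_card: "finite (Wvec p h)" "card (Wvec p h) = p ^ h"
  using card_funs[of h "\<lambda>_. {0..<int p}" 0] by (simp_all add: Wvec_alt)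

lemma Hset_card: "finite (Hset p h)" "card (Hset p h) = p ^ (h + 1)"
  using Wvec_card by (simp_all add: Hset_def card_cartesian_product)

end


context heis begin

lemma hgen_sub: assumes "S \<subseteq> Hset p h" shows "hgen p \<omega> S \<subseteq> Hset p h"
proof
  fix x assume "x \<in> hgen p \<omega> S" then show "x \<in> Hset p h"
    by (induction rule: hgen.induct) (use assms hone_H hmul_H in auto)
qed

lemma gen_iter:
  assumes S: "S \<subseteq> Hset p h" and u: "(u, s) \<in> hgen p \<omega> S" and w: "(w, y) \<in> S"
  shows "\<exists>s'. ((\<lambda>i. (u i + int n * w i) mod int p), s') \<in> hgen p \<omega> S"
proof (induction n)
  case 0
  have "u \<in> Wvec p h" using hgen_sub[OF S] u by (auto simp: Hset_def)
  then have "(\<lambda>i. (u i + int 0 * w i) mod int p) = u" using W_mod by auto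
  then show ?case using u by auto
next
  case (Suc n)
  then obtain s' where s': "((\<lambda>i. (u i + int n * w i) mod int p), s') \<in> hgen p \<omega> S" by blast
  have "hmul p \<omega> ((\<lambda>i. (u i + int n * w i) mod int p), s') (w, y) \<in> hgen p \<omega> S"
    using hgen.step[OF s' w] .
  moreover have "vadd p (\<lambda>i. (u i + int n * w i) mod int p) w = (\<lambda>i. (u i + int (Suc n) * w i) mod int p)"
  proof
    fix i
    have "((u i + int n * w i) mod int p + w i) mod int p = (u i + int n * w i + w i) mod int p"
      by (rule mod_add_left_eq)
    then show "vadd p (\<lambda>i. (u i + int n * w i) mod int p) w i = (u i + int (Suc n) * w i) mod int p"
      by (simp add: vadd_def algebra_simps)
  qed
  ultimately show ?case by (auto simp: hmul_def)
qed

lemma gen_z: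
  assumes S: "S \<subseteq> Hset p h" and one: "(z0, 1) \<in> S" and vs: "(v, s) \<in> hgen p \<omega> S"
    and z: "0 \<le> z" "z < int p"
  shows "(v, z) \<in> hgen p \<omega> S"
proof -
  have vH: "v \<in> Wvec p h" "0 \<le> s" "s < int p" using hgen_sub[OF S] vs by (auto simp: Hset_def)
  have all: "(v, (s + int n) mod int p) \<in> hgen p \<omega> S" for n
  proof (induction n)
    case 0 then show ?case using vs vH by simp
  next
    case (Suc n)
    have "hmul p \<omega> (v, (s + int n) mod int p) (z0, 1) \<in> hgen p \<omega> S"
      using hgen.step[OF Suc one] .
    moreover have "hmul p \<omega> (v, (s + int n) mod int p) (z0, 1) = (v, (s + int (Suc n)) mod int p)"
    proof -
      have "((s + int n) mod int p + 1) mod int p = (s + int n + 1) mod int p"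
        by (rule mod_add_left_eq)
      then show ?thesis using vH omega_z0[of v] vadd_z0[of v]
        by (simp add: hmul_def algebra_simps)
    qed
    ultimately show ?case by simp
  qed
  have "(s + int (nat ((z - s) mod int p))) mod int p = z"
    using z ppos by (simp add: mod_add_right_eq)
  then show ?thesis using all[of "nat ((z - s) mod int p)"] by simp
qed

lemma gen_all_v:
  assumes S: "S \<subseteq> Hset p h"
    and tri: "\<forall>k<h. \<exists>w y. (w, y) \<in> S \<and> w k = 1 \<and> (\<forall>l<k. w l = 0)"
  shows "\<forall>v\<in>Wvec p h. \<exists>s. (v, s) \<in> hgen p \<omega> S"
proof -
  have main: "\<forall>v\<in>Wvec p h. (\<forall>l<h - j. v l = 0) \<longrightarrow> (\<exists>s. (v, s) \<in> hgen p \<omega> S)" if "j \<le> h" for j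
    using that
  proof (induction j)
    case 0
    show ?case
    proof (intro ballI impI)
      fix v assume v: "v \<in> Wvec p h" "\<forall>l<h - 0. v l = 0"
      have "v x = 0" for x using v by (cases "x < h") (auto simp: Wvec_def)
      then have "v = z0" by (auto simp: z0_def)
      then have "(v, 0) = hone" by (simp add: hone_def z0_def)
      then show "\<exists>s. (v, s) \<in> hgen p \<omega> S" using hgen.one by metis
    qed
  next
    case (Suc j)
    define k where "k = h - Suc j"
    have k: "k < h" "h - j = Suc k" using Suc.prems by (auto simp: k_def)
    obtain w y where wy: "(w, y) \<in> S" "w k = 1" "\<forall>l<k. w l = 0" using tri k by blast
    have wW: "w \<in> Wvec p h" using S wy by (auto simp: Hset_def)
    show ?case
    proof (intro ballI impI)
      fix v assume v: "v \<in> Wvec p h" "\<forall>l<h - Suc j. v l = 0"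
      define a where "a = v k"
      have a: "0 \<le> a" "a < int p" using v k by (auto simp: Wvec_def a_def)
      define v2 where "v2 = (\<lambda>i. (v i - a * w i) mod int p)"
      have v2W: "v2 \<in> Wvec p h" using v wW ppos by (auto simp: Wvec_def v2_def)
      have v2z: "\<forall>l<h - j. v2 l = 0"
      proof (intro allI impI)
        fix l assume "l < h - j"
        then have "l < k \<or> l = k" using k by auto
        then show "v2 l = 0" using v wy unfolding v2_def a_def k_def by auto
      qed
      obtain s where s: "(v2, s) \<in> hgen p \<omega> S" using Suc.IH Suc.prems v2W v2z by auto
      obtain s' where s': "((\<lambda>i. (v2 i + int (nat a) * w i) mod int p), s') \<in> hgen p \<omega> S"
        using gen_iter[OF S s wy(1)] by blast
      have "(\<lambda>i. (v2 i + int (nat a) * w i) mod int p) = v"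
      proof
        fix i
        have "(v2 i + int (nat a) * w i) mod int p = ((v i - a * w i) mod int p + a * w i) mod int p"
          using a by (simp add: v2_def)
        also have "\<dots> = v i mod int p" by (simp add: mod_add_left_eq)
        also have "\<dots> = v i" using W_mod v by simp
        finally show "(v2 i + int (nat a) * w i) mod int p = v i" .
      qed
      then show "\<exists>s. (v, s) \<in> hgen p \<omega> S" using s' by auto
    qed
  qed
  show ?thesis using main[of h] by simp
qed

lemma gen_full:
  assumes S: "S \<subseteq> Hset p h" and one: "(z0, 1) \<in> S"
    and tri: "\<forall>k<h. \<exists>w y. (w, y) \<in> S \<and> w k = 1 \<and> (\<forall>l<k. w l = 0)"
  shows "hgen p \<omega> S = Hset p h"
proof
  show "hgen p \<omega> S \<subseteq> Hset p h" using hgen_sub[OF S] .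
  show "Hset p h \<subseteq> hgen p \<omega> S"
  proof
    fix g assume "g \<in> Hset p h"
    then obtain v z where g: "g = (v, z)" "v \<in> Wvec p h" "0 \<le> z" "z < int p" by (auto simp: Hset_def)
    obtain s where "(v, s) \<in> hgen p \<omega> S" using gen_all_v[OF S tri] g by blast
    then show "g \<in> hgen p \<omega> S" using gen_z[OF S one] g by blast
  qed
qed

end


definition Tk :: "nat \<Rightarrow> nat \<Rightarrow> nat \<Rightarrow> (nat \<Rightarrow> int) set" where
  "Tk p h k = {w. (\<forall>i<h. w i \<in> (if i < k then {0} else if i = k then {1} else {0..<int p}))
                  \<and> (\<forall>i\<ge>h. w i = 0)}"

definition Bset :: "nat \<Rightarrow> nat \<Rightarrow> nat \<Rightarrow> helem set" where
  "Bset p h i = (if i < h then Tk p h i \<times> {0..<int p} else if i = h then {(z0, 1)} else Hset p h)"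

definition Fam :: "nat \<Rightarrow> nat \<Rightarrow> nat \<Rightarrow> (nat \<Rightarrow> helem) set" where
  "Fam p h r = {g. (\<forall>i<r. g i \<in> Bset p h i) \<and> (\<forall>i\<ge>r. g i = hone)}"

definition Gall :: "nat \<Rightarrow> nat \<Rightarrow> nat \<Rightarrow> (nat \<Rightarrow> helem) set" where
  "Gall p h r = {g. (\<forall>i<r. g i \<in> Hset p h) \<and> (\<forall>i\<ge>r. g i = hone)}"

definition unitv :: "nat \<Rightarrow> nat \<Rightarrow> int" where
  "unitv k = (\<lambda>l. if l = k then 1 else 0)"

definition x0 :: "nat \<Rightarrow> nat \<Rightarrow> helem" where
  "x0 h i = (if i < h then (unitv i, 0) else if i = h then (z0, 1) else hone)"

definition ecount :: "nat \<Rightarrow> nat \<Rightarrow> nat" where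
  "ecount h i = (if i < h then h - i else if i = h then 0 else h + 1)"

lemma prod_if_pow: "(\<Prod>i<n. (if k < i then c else 1)) = (c::nat) ^ (n - Suc k)"
proof (induction n)
  case 0 then show ?case by simp
next
  case (Suc n)
  show ?case
  proof (cases "k < n")
    case True
    then have "Suc n - Suc k = Suc (n - Suc k)" by simp
    then show ?thesis using Suc True by (simp add: mult.commute)
  next
    case False
    then show ?thesis using Suc by simp
  qed
qed

lemma gauss2: fixes h :: nat shows "2 * (\<Sum>i<h. h - i) = h * (h + 1)"
proof (induction h)
  case 0 then show ?case by simp
next
  case (Suc h)
  have "(\<Sum>i<h. Suc h - i) = (\<Sum>i<h. (h - i) + 1)"
    by (rule sum.cong) auto
  also have "\<dots> = (\<Sum>i<h. h - i) + (\<Sum>i<h. (1::nat))" by (rule sum.distrib)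
  also have "\<dots> = (\<Sum>i<h. h - i) + h" by simp
  finally have "(\<Sum>i<Suc h. Suc h - i) = (\<Sum>i<h. h - i) + h + 1" by simp
  then show ?case using Suc by simp
qed

lemma sum_ecount: fixes h n :: nat shows "h < n \<Longrightarrow> (h + 1) * (n - 1) \<le> 2 * (\<Sum>i<n. ecount h i)"
proof (induction n)
  case 0 then show ?case by simp
next
  case (Suc m)
  show ?case
  proof (cases "m = h")
    case True
    have "(\<Sum>i<m. ecount h i) = (\<Sum>i<h. h - i)" using True by (auto simp: ecount_def intro: sum.cong)
    then show ?thesis using True gauss2[of h] by (simp add: ecount_def)
  next
    case False
    then have "h < m" using Suc by simp
    then have "(h + 1) * (m - 1) \<le> 2 * (\<Sum>i<m. ecount h i)" using Suc by simp
    moreover have "ecount h m = h + 1" using \<open>h < m\<close> by (simp add: ecount_def)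
    moreover have "(h + 1) * (Suc m - 1) \<le> (h + 1) * (m - 1) + 2 * (h + 1)"
      by (cases m) (auto simp: algebra_simps)
    ultimately show ?thesis by simp
  qed
qed

context heis begin

lemma Tk_card: assumes "k < h" shows "finite (Tk p h k)" "card (Tk p h k) = p ^ (h - Suc k)"
proof -
  let ?C = "\<lambda>i. (if i < k then {0} else if i = k then {1} else {0..<int p})"
  have e: "Tk p h k = {w. (\<forall>i<h. w i \<in> ?C i) \<and> (\<forall>i\<ge>h. w i = 0)}" by (simp add: Tk_def)
  have c: "card (?C i) = (if k < i then p else 1)" for i by auto
  show "finite (Tk p h k)" using card_funs[of h ?C 0] e by simp
  show "card (Tk p h k) = p ^ (h - Suc k)"
    using card_funs[of h ?C 0] e c prod_if_pow[where n=h and k=k and c=p] by simp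
qed

lemma Tk_W: "Tk p h k \<subseteq> Wvec p h"
  using p3 by (auto simp: Tk_def Wvec_def split: if_splits)

lemma Bset_H: "Bset p h i \<subseteq> Hset p h"
proof (cases "i < h")
  case True
  have "Tk p h i \<times> {0..<int p} \<subseteq> Wvec p h \<times> {0..<int p}" using Tk_W by blast
  then show ?thesis using True by (simp add: Bset_def Hset_def)
next
  case False
  have "(z0, 1) \<in> Hset p h" using z0_W p3 by (simp add: Hset_def)
  then show ?thesis using False by (simp add: Bset_def)
qed

lemma Bset_card: "finite (Bset p h i)" "card (Bset p h i) = p ^ ecount h i"
proof -
  show "finite (Bset p h i)"
  proof (cases "i < h")
    case True then show ?thesis using Tk_card(1)[of i] by (simp add: Bset_def)
  next
    case False then show ?thesis using Hset_card(1) by (simp add: Bset_def)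
  qed
  show "card (Bset p h i) = p ^ ecount h i"
  proof (cases "i < h")
    case True
    have e: "p ^ (h - i) = p ^ (h - Suc i) * p"
      using True by (metis Suc_diff_Suc power_Suc mult.commute)
    have "card (Bset p h i) = card (Tk p h i) * card {0..<int p}"
      using True by (simp add: Bset_def card_cartesian_product)
    also have "\<dots> = p ^ (h - Suc i) * p" using Tk_card(2)[OF True] by simp
    finally show ?thesis using True e by (simp add: ecount_def)
  next
    case False
    show ?thesis
    proof (cases "i = h")
      case True then show ?thesis by (simp add: Bset_def ecount_def)
    next
      case F2: False
      then have "Bset p h i = Hset p h" "ecount h i = h + 1" using False by (simp_all add: Bset_def ecount_def)
      then show ?thesis using Hset_card(2) by simp
    qed
  qed
qed

lemma Fam_card: "finite (Fam p h r)" "card (Fam p h r) = p ^ (\<Sum>i<r. ecount h i)"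
proof -
  have c: "finite (Fam p h r) \<and> card (Fam p h r) = (\<Prod>i<r. card (Bset p h i))"
    using card_funs[of r "Bset p h" hone] Bset_card(1) unfolding Fam_def by blast
  then show "finite (Fam p h r)" by simp
  have "(\<Prod>i<r. card (Bset p h i)) = (\<Prod>i<r. p ^ ecount h i)"
    using Bset_card(2) by simp
  also have "\<dots> = p ^ (\<Sum>i<r. ecount h i)" by (simp add: power_sum)
  finally show "card (Fam p h r) = p ^ (\<Sum>i<r. ecount h i)" using c by simp
qed

lemma Fam_Vr: assumes "h < r" shows "Fam p h r \<subseteq> Vr p h \<omega> r"
proof
  fix g assume g: "g \<in> Fam p h r"
  let ?S = "g ` {..<r}"
  have gi: "\<forall>i<r. g i \<in> Hset p h" using g Bset_H unfolding Fam_def by blast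
  then have S: "?S \<subseteq> Hset p h" by auto
  have one: "(z0, 1) \<in> ?S"
  proof -
    have "g h = (z0, 1)" using g assms by (auto simp: Fam_def Bset_def)
    then show ?thesis using assms by (metis image_eqI lessThan_iff)
  qed
  have tri: "\<forall>k<h. \<exists>w y. (w, y) \<in> ?S \<and> w k = 1 \<and> (\<forall>l<k. w l = 0)"
  proof (intro allI impI)
    fix k assume k: "k < h"
    have "g k \<in> Bset p h k" using g k assms unfolding Fam_def by auto
    then have "g k \<in> Tk p h k \<times> {0..<int p}" using k by (simp add: Bset_def)
    then obtain w y where wy: "g k = (w, y)" "w \<in> Tk p h k" by auto
    have "w k = 1" using wy(2) k unfolding Tk_def by auto
    moreover have "\<forall>l<k. w l = 0"
    proof (intro allI impI)
      fix l assume "l < k"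
      then have "l < h" using k by simp
      then show "w l = 0" using wy(2) \<open>l < k\<close> unfolding Tk_def by auto
    qed
    moreover have "(w, y) \<in> ?S" using wy k assms by (metis image_eqI lessThan_iff less_trans)
    ultimately show "\<exists>w y. (w, y) \<in> ?S \<and> w k = 1 \<and> (\<forall>l<k. w l = 0)" by blast
  qed
  have "hgen p \<omega> ?S = Hset p h" using gen_full[OF S one tri] .
  then show "g \<in> Vr p h \<omega> r" using g S by (auto simp: Vr_def Fam_def)
qed

lemma Vr_Gall: "Vr p h \<omega> r \<subseteq> Gall p h r" by (auto simp: Vr_def Gall_def)

lemma Gall_card: "finite (Gall p h r)" "card (Gall p h r) = p ^ ((h + 1) * r)"
proof -
  have c: "finite (Gall p h r) \<and> card (Gall p h r) = (\<Prod>i<r. card (Hset p h))"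
    using card_funs[of r "\<lambda>_. Hset p h" hone] Hset_card by (simp add: Gall_def)
  then show "finite (Gall p h r)" by simp
  have "(\<Prod>i<r. card (Hset p h)) = (p ^ (h + 1)) ^ r" using Hset_card(2) by simp
  then show "card (Gall p h r) = p ^ ((h + 1) * r)" using c by (simp only: power_mult)
qed

lemma Vr_finite: "finite (Vr p h \<omega> r)"
  using Gall_card(1) Vr_Gall finite_subset by blast

lemma Vr_card_lb: assumes "h < r" shows "p ^ (\<Sum>i<r. ecount h i) \<le> card (Vr p h \<omega> r)"
  using card_mono[OF Vr_finite Fam_Vr[OF assms]] Fam_card by simp

lemma x0_Fam: assumes "h < r" shows "x0 h \<in> Fam p h r"
proof -
  have "x0 h i \<in> Bset p h i" if "i < r" for i
  proof (cases "i < h")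
    case True
    have "unitv i \<in> Tk p h i" using True p3 unfolding Tk_def unitv_def by auto
    then show ?thesis using True ppos by (simp add: x0_def Bset_def)
  next
    case False
    then show ?thesis using hone_H by (auto simp: x0_def Bset_def)
  qed
  moreover have "x0 h i = hone" if "r \<le> i" for i using that assms by (simp add: x0_def)
  ultimately show ?thesis by (simp add: Fam_def)
qed

lemma x0_Vr: assumes "h < r" shows "x0 h \<in> Vr p h \<omega> r"
  using x0_Fam[OF assms] Fam_Vr[OF assms] by blast

end


definition moves :: "nat \<Rightarrow> ((nat \<Rightarrow> int) \<Rightarrow> (nat \<Rightarrow> int) \<Rightarrow> int) \<Rightarrow> nat \<Rightarrow> (nat \<Rightarrow> helem) \<Rightarrow> (nat \<Rightarrow> helem) set" where
  "moves p \<omega> r z = (\<lambda>(i, j, a). TR p \<omega> j i a z) ` ({..<r} \<times> {..<r} \<times> {..<p})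
                  \<union> (\<lambda>(i, j, a). TL p \<omega> j i a z) ` ({..<r} \<times> {..<r} \<times> {..<p})"

fun Reach :: "nat \<Rightarrow> ((nat \<Rightarrow> int) \<Rightarrow> (nat \<Rightarrow> int) \<Rightarrow> int) \<Rightarrow> nat \<Rightarrow> (nat \<Rightarrow> helem) \<Rightarrow> nat \<Rightarrow> (nat \<Rightarrow> helem) set" where
  "Reach p \<omega> r x 0 = {x}"
| "Reach p \<omega> r x (Suc t) = Reach p \<omega> r x t \<union> \<Union> (moves p \<omega> r ` Reach p \<omega> r x t)"

lemma moves_card: "finite (moves p \<omega> r z)" "card (moves p \<omega> r z) \<le> 2 * (r * r * p)"
proof -
  let ?X = "{..<r} \<times> {..<r} \<times> {..<p}"
  have cx: "card ?X = r * r * p" by (simp add: card_cartesian_product)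
  show "finite (moves p \<omega> r z)" by (simp add: moves_def)
  have "card (moves p \<omega> r z) \<le> card ((\<lambda>(i, j, a). TR p \<omega> j i a z) ` ?X) + card ((\<lambda>(i, j, a). TL p \<omega> j i a z) ` ?X)"
    unfolding moves_def by (rule card_Un_le)
  also have "\<dots> \<le> card ?X + card ?X" by (intro add_mono card_image_le) auto
  finally show "card (moves p \<omega> r z) \<le> 2 * (r * r * p)" using cx by simp
qed

lemma Reach_card: "finite (Reach p \<omega> r x t) \<and> card (Reach p \<omega> r x t) \<le> (1 + 2 * (r * r * p)) ^ t"
proof (induction t)
  case 0 then show ?case by simp
next
  case (Suc t)
  let ?R = "Reach p \<omega> r x t"
  let ?M = "2 * (r * r * p)"
  have fin: "finite (Reach p \<omega> r x (Suc t))" using Suc moves_card(1) by simp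
  have "card (Reach p \<omega> r x (Suc t)) \<le> card ?R + card (\<Union> (moves p \<omega> r ` ?R))"
    by (simp add: card_Un_le)
  also have "card (\<Union> (moves p \<omega> r ` ?R)) \<le> (\<Sum>z\<in>?R. card (moves p \<omega> r z))"
    by (rule card_UN_le) (use Suc in simp)
  also have "\<dots> \<le> (\<Sum>z\<in>?R. ?M)" by (rule sum_mono) (rule moves_card(2))
  also have "\<dots> = card ?R * ?M" by simp
  finally have "card (Reach p \<omega> r x (Suc t)) \<le> card ?R * (1 + ?M)" by (simp add: algebra_simps)
  also have "\<dots> \<le> (1 + ?M) ^ t * (1 + ?M)" using Suc by (intro mult_right_mono) auto
  finally show ?case using fin by (simp add: mult.commute)
qed

lemma Reach_mono: "Reach p \<omega> r x t \<subseteq> Reach p \<omega> r x (Suc t)" by auto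

lemma Qker_nz: assumes "Qker p \<omega> r z y \<noteq> 0" shows "y = z \<or> y \<in> moves p \<omega> r z"
proof (rule ccontr)
  assume a: "\<not> (y = z \<or> y \<in> moves p \<omega> r z)"
  have e1: "{(i, j, a). i < r \<and> j < r \<and> i \<noteq> j \<and> a < p \<and> TR p \<omega> j i a z = y} = {}"
  proof -
    { fix i j b assume "i < r" "j < r" "b < p" "TR p \<omega> j i b z = y"
      then have "y \<in> moves p \<omega> r z" unfolding moves_def by (force intro!: image_eqI[where x = "(i, j, b)"]) }
    then show ?thesis using a by auto
  qed
  have e2: "{(i, j, a). i < r \<and> j < r \<and> i \<noteq> j \<and> a < p \<and> TL p \<omega> j i a z = y} = {}"
  proof -
    { fix i j b assume "i < r" "j < r" "b < p" "TL p \<omega> j i b z = y"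
      then have "y \<in> moves p \<omega> r z" unfolding moves_def by (force intro!: image_eqI[where x = "(i, j, b)"]) }
    then show ?thesis using a by auto
  qed
  have "Pker p \<omega> r z y = 0" unfolding Pker_def e1 e2 by simp
  then have "Qker p \<omega> r z y = 0" using a by (auto simp: Qker_def)
  then show False using assms by simp
qed

lemma Qpow_support: "Qpow p h \<omega> r t x y \<noteq> 0 \<Longrightarrow> y \<in> Reach p \<omega> r x t"
proof (induction t arbitrary: y)
  case 0 then show ?case by (simp split: if_splits)
next
  case (Suc t)
  then obtain z where z: "z \<in> Vr p h \<omega> r" "Qpow p h \<omega> r t x z * Qker p \<omega> r z y \<noteq> 0"
    by (metis (no_types, lifting) Qpow.simps(2) sum.neutral)
  then have "z \<in> Reach p \<omega> r x t" "Qker p \<omega> r z y \<noteq> 0" using Suc.IH by auto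
  then have "y = z \<or> y \<in> moves p \<omega> r z" using Qker_nz by blast
  then show ?case using \<open>z \<in> Reach p \<omega> r x t\<close> by auto
qed


definition phi :: "nat \<Rightarrow> (nat \<Rightarrow> helem) \<Rightarrow> nat" where
  "phi r y = card {i. i < r \<and> y i \<noteq> hone}"

definition Mset :: "nat \<Rightarrow> nat \<Rightarrow> (nat \<times> nat \<times> nat) set" where
  "Mset p r = {(i, j, a). i < r \<and> j < r \<and> i \<noteq> j \<and> a < p}"

lemma Mset_sub: "Mset p r \<subseteq> {..<r} \<times> {..<r} \<times> {..<p}" by (auto simp: Mset_def)

lemma Mset_finite: "finite (Mset p r)" using Mset_sub finite_subset by blast

lemma Mset_card: "card (Mset p r) = r * (r - 1) * p"
proof -
  have e: "Mset p r = (SIGMA i:{..<r}. ({..<r} - {i}) \<times> {..<p})" by (auto simp: Mset_def)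
  have "card (SIGMA i:{..<r}. ({..<r} - {i}) \<times> {..<p}) = (\<Sum>i<r. card (({..<r} - {i}) \<times> {..<p}))"
    by (rule card_SigmaI) auto
  also have "\<dots> = (\<Sum>i<r. (r - 1) * p)" by (rule sum.cong) (auto simp: card_cartesian_product)
  finally show ?thesis using e by simp
qed

lemma phi_upd: "phi r (z(i := v)) \<le> phi r z + 1"
proof -
  have "{k. k < r \<and> (z(i := v)) k \<noteq> hone} \<subseteq> insert i {k. k < r \<and> z k \<noteq> hone}" by auto
  then have "card {k. k < r \<and> (z(i := v)) k \<noteq> hone} \<le> card (insert i {k. k < r \<and> z k \<noteq> hone})"
    by (intro card_mono) auto
  also have "\<dots> \<le> Suc (card {k. k < r \<and> z k \<noteq> hone})" by (rule card_insert_le_m1) auto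
  finally show ?thesis by (simp add: phi_def)
qed

lemma fiber_sum:
  fixes g :: "'b \<Rightarrow> real"
  assumes "finite M" "finite V" "\<And>y. g y \<ge> 0"
  shows "(\<Sum>y\<in>V. real (card {m \<in> M. f m = y}) * g y) \<le> (\<Sum>m\<in>M. g (f m))"
proof -
  let ?S = "{m \<in> M. f m \<in> V}"
  have "(\<Sum>y\<in>V. real (card {m \<in> M. f m = y}) * g y) = (\<Sum>y\<in>V. \<Sum>m\<in>{m \<in> ?S. f m = y}. g (f m))"
  proof (rule sum.cong)
    fix y assume y: "y \<in> V"
    have "{m \<in> ?S. f m = y} = {m \<in> M. f m = y}" using y by auto
    moreover have "(\<Sum>m\<in>{m \<in> M. f m = y}. g (f m)) = (\<Sum>m\<in>{m \<in> M. f m = y}. g y)" by (rule sum.cong) auto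
    ultimately show "real (card {m \<in> M. f m = y}) * g y = (\<Sum>m\<in>{m \<in> ?S. f m = y}. g (f m))" by simp
  qed simp
  also have "\<dots> = (\<Sum>m\<in>?S. g (f m))"
    by (rule sum.group) (use assms in auto)
  also have "\<dots> \<le> (\<Sum>m\<in>M. g (f m))"
    by (rule sum_mono2) (use assms in auto)
  finally show ?thesis .
qed

lemma sum_ind_bound:
  fixes F :: "nat \<Rightarrow> real"
  assumes "\<And>j. F j \<ge> 0"
  shows "(\<Sum>m\<in>Mset p r. F (fst (snd m))) \<le> real r * real p * (\<Sum>j<r. F j)"
proof -
  have "(\<Sum>m\<in>Mset p r. F (fst (snd m))) \<le> (\<Sum>m\<in>{..<r} \<times> {..<r} \<times> {..<p}. F (fst (snd m)))"
    by (rule sum_mono2) (use Mset_sub assms in auto)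
  also have "\<dots> = (\<Sum>(i, ja)\<in>{..<r} \<times> ({..<r} \<times> {..<p}). F (fst ja))"
    by (rule sum.cong) auto
  also have "\<dots> = (\<Sum>i<r. \<Sum>ja\<in>{..<r} \<times> {..<p}. F (fst ja))"
    by (rule sum.cartesian_product[symmetric])
  also have "\<dots> = (\<Sum>i<r. \<Sum>(j, a)\<in>{..<r} \<times> {..<p}. F j)"
    by (rule sum.cong) (auto intro: sum.cong)
  also have "\<dots> = (\<Sum>i<r. \<Sum>j<r. \<Sum>a<p. F j)"
    by (rule sum.cong) (simp_all only: sum.cartesian_product)
  also have "\<dots> = real r * real p * (\<Sum>j<r. F j)"
    by (simp add: sum_distrib_left mult.assoc)
  finally show ?thesis .
qed

context heis begin

lemma TR_phi:
  assumes z: "\<forall>k<r. z k \<in> Hset p h" and i: "i < r"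
  shows "phi r (TR p \<omega> j i a z) \<le> phi r z + (if z j = hone then 0 else 1)"
proof (cases "z j = hone")
  case True
  then have "TR p \<omega> j i a z = z" using hpow_hone hmul_hone z i by (simp add: TR_def)
  then show ?thesis by simp
next
  case False then show ?thesis using phi_upd by (simp add: TR_def)
qed

lemma TL_phi:
  assumes z: "\<forall>k<r. z k \<in> Hset p h" and i: "i < r"
  shows "phi r (TL p \<omega> j i a z) \<le> phi r z + (if z j = hone then 0 else 1)"
proof (cases "z j = hone")
  case True
  then have "TL p \<omega> j i a z = z" using hpow_hone hmul_hone z i by (simp add: TL_def)
  then show ?thesis by simp
next
  case False then show ?thesis using phi_upd by (simp add: TL_def)
qed

lemma sum_moves_phi:
  assumes z: "\<forall>k<r. z k \<in> Hset p h"
    and f: "\<And>i j a. i < r \<Longrightarrow> phi r (f (i, j, a)) \<le> phi r z + (if z j = hone then 0 else 1)"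
  shows "(\<Sum>m\<in>Mset p r. real (phi r (f m))) \<le> real (card (Mset p r)) * real (phi r z) + real r * real p * real (phi r z)"
proof -
  let ?F = "\<lambda>j. (if z j = hone then 0 else 1::real)"
  have "(\<Sum>m\<in>Mset p r. real (phi r (f m))) \<le> (\<Sum>m\<in>Mset p r. real (phi r z) + ?F (fst (snd m)))"
  proof (rule sum_mono)
    fix m assume "m \<in> Mset p r"
    then obtain i j a where m: "m = (i, j, a)" "i < r" by (auto simp: Mset_def)
    show "real (phi r (f m)) \<le> real (phi r z) + ?F (fst (snd m))"
      using f[of i j a] m by (auto split: if_splits)
  qed
  also have "\<dots> = real (card (Mset p r)) * real (phi r z) + (\<Sum>m\<in>Mset p r. ?F (fst (snd m)))"
    by (simp add: sum.distrib)
  also have "(\<Sum>m\<in>Mset p r. ?F (fst (snd m))) \<le> real r * real p * (\<Sum>j<r. ?F j)"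
    by (rule sum_ind_bound) simp
  also have "(\<Sum>j<r. ?F j) = real (phi r z)"
  proof -
    have "(\<Sum>j<r. ?F j) = (\<Sum>j<r. of_bool (z j \<noteq> hone))" by (rule sum.cong) auto
    also have "\<dots> = real (card ({..<r} \<inter> {j. z j \<noteq> hone}))" by simp
    also have "{..<r} \<inter> {j. z j \<noteq> hone} = {j. j < r \<and> z j \<noteq> hone}" by auto
    finally show ?thesis by (simp add: phi_def)
  qed
  finally show ?thesis by simp
qed

end


lemma Pker_nonneg: "Pker p \<omega> r z y \<ge> 0"
proof -
  have "2 * real p * real r * (real r - 1) \<ge> 0"
    by (cases r) auto
  then show ?thesis unfolding Pker_def by (intro divide_nonneg_nonneg) auto
qed

lemma Qker_nonneg: "Qker p \<omega> r z y \<ge> 0"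
  using Pker_nonneg[of p \<omega> r z y] by (simp add: Qker_def)

lemma Qpow_nonneg: "Qpow p h \<omega> r t x y \<ge> 0"
proof (induction t arbitrary: y)
  case 0 then show ?case by simp
next
  case (Suc t) then show ?case by (simp add: sum_nonneg Qker_nonneg)
qed

lemma set_TR_eq: "{(i, j, a). i < r \<and> j < r \<and> i \<noteq> j \<and> a < p \<and> TR p \<omega> j i a z = y}
   = {m \<in> Mset p r. (\<lambda>(i, j, a). TR p \<omega> j i a z) m = y}"
  by (auto simp: Mset_def)

lemma set_TL_eq: "{(i, j, a). i < r \<and> j < r \<and> i \<noteq> j \<and> a < p \<and> TL p \<omega> j i a z = y}
   = {m \<in> Mset p r. (\<lambda>(i, j, a). TL p \<omega> j i a z) m = y}"
  by (auto simp: Mset_def)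

context heis begin

lemma P_phi:
  assumes z: "z \<in> Vr p h \<omega> r" and r: "r \<ge> 2"
  shows "(\<Sum>y\<in>Vr p h \<omega> r. Pker p \<omega> r z y * real (phi r y)) \<le> real (phi r z) * (1 + 1 / (real r - 1))"
proof -
  let ?V = "Vr p h \<omega> r"
  let ?fR = "\<lambda>(i, j, a). TR p \<omega> j i a z"
  let ?fL = "\<lambda>(i, j, a). TL p \<omega> j i a z"
  let ?D = "2 * real p * real r * (real r - 1)"
  let ?g = "\<lambda>y. real (phi r y)"
  have zH: "\<forall>k<r. z k \<in> Hset p h" using z by (auto simp: Vr_def)
  have Dpos: "?D > 0" using r ppos by auto
  have "(\<Sum>y\<in>?V. Pker p \<omega> r z y * ?g y)
      = ((\<Sum>y\<in>?V. real (card {m \<in> Mset p r. ?fR m = y}) * ?g y)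
        + (\<Sum>y\<in>?V. real (card {m \<in> Mset p r. ?fL m = y}) * ?g y)) / ?D"
    unfolding Pker_def set_TR_eq set_TL_eq
    by (simp add: sum_divide_distrib[symmetric] sum.distrib[symmetric] algebra_simps)
  also have "\<dots> \<le> ((\<Sum>m\<in>Mset p r. ?g (?fR m)) + (\<Sum>m\<in>Mset p r. ?g (?fL m))) / ?D"
    using Dpos
    by (intro divide_right_mono add_mono fiber_sum Mset_finite Vr_finite) auto
  also have "\<dots> \<le> ((real (card (Mset p r)) * ?g z + real r * real p * ?g z)
                + (real (card (Mset p r)) * ?g z + real r * real p * ?g z)) / ?D"
  proof -
    have a: "(\<Sum>m\<in>Mset p r. ?g (?fR m)) \<le> real (card (Mset p r)) * ?g z + real r * real p * ?g z"
      by (rule sum_moves_phi[OF zH]) (simp add: TR_phi[OF zH])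
    have b: "(\<Sum>m\<in>Mset p r. ?g (?fL m)) \<le> real (card (Mset p r)) * ?g z + real r * real p * ?g z"
      by (rule sum_moves_phi[OF zH]) (simp add: TL_phi[OF zH])
    show ?thesis using a b Dpos by (intro divide_right_mono add_mono) auto
  qed
  also have "\<dots> = ?g z * (1 + 1 / (real r - 1))"
  proof -
    have c: "real (card (Mset p r)) = real r * (real r - 1) * real p"
      using r by (simp add: Mset_card of_nat_diff)
    have "real r - 1 > 0" using r by simp
    then show ?thesis using Dpos ppos r unfolding c by (simp add: field_simps)
  qed
  finally show ?thesis .
qed

lemma Q_phi:
  assumes z: "z \<in> Vr p h \<omega> r" and r: "r \<ge> 2"
  shows "(\<Sum>y\<in>Vr p h \<omega> r. Qker p \<omega> r z y * real (phi r y)) \<le> real (phi r z) * (1 + 1 / (2 * (real r - 1)))"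
proof -
  let ?V = "Vr p h \<omega> r"
  have "(\<Sum>y\<in>?V. Qker p \<omega> r z y * real (phi r y))
      = ((\<Sum>y\<in>?V. (if z = y then 1 else 0) * real (phi r y)) + (\<Sum>y\<in>?V. Pker p \<omega> r z y * real (phi r y))) / 2"
    unfolding Qker_def by (simp add: sum_divide_distrib[symmetric] sum.distrib[symmetric] algebra_simps)
  also have "(\<Sum>y\<in>?V. (if z = y then 1 else 0) * real (phi r y)) = real (phi r z)"
  proof -
    have "(\<Sum>y\<in>?V. (if z = y then 1 else 0) * real (phi r y)) = (\<Sum>y\<in>?V. if z = y then real (phi r y) else 0)"
      by (rule sum.cong) auto
    then show ?thesis using z Vr_finite by simp
  qed
  finally have e: "(\<Sum>y\<in>?V. Qker p \<omega> r z y * real (phi r y))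
      = (real (phi r z) + (\<Sum>y\<in>?V. Pker p \<omega> r z y * real (phi r y))) / 2" .
  have rp: "real r - 1 > 0" using r by simp
  have "real (phi r z) * (1 + 1 / (2 * (real r - 1))) = (real (phi r z) + real (phi r z) * (1 + 1 / (real r - 1))) / 2"
    using rp by (simp add: field_simps)
  moreover have "(real (phi r z) + (\<Sum>y\<in>?V. Pker p \<omega> r z y * real (phi r y))) / 2
      \<le> (real (phi r z) + real (phi r z) * (1 + 1 / (real r - 1))) / 2"
    using P_phi[OF z r] by (intro divide_right_mono add_left_mono) simp_all
  ultimately show ?thesis unfolding e by simp
qed

lemma E_bound:
  assumes x: "x \<in> Vr p h \<omega> r" and r: "r \<ge> 2"
  shows "(\<Sum>y\<in>Vr p h \<omega> r. Qpow p h \<omega> r t x y * real (phi r y)) \<le> real (phi r x) * (1 + 1 / (2 * (real r - 1))) ^ t"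
proof (induction t)
  case 0
  have "(\<Sum>y\<in>Vr p h \<omega> r. Qpow p h \<omega> r 0 x y * real (phi r y)) = (\<Sum>y\<in>Vr p h \<omega> r. if x = y then real (phi r y) else 0)"
    by (rule sum.cong) auto
  then show ?case using x Vr_finite by simp
next
  case (Suc t)
  let ?V = "Vr p h \<omega> r"
  let ?q = "1 + 1 / (2 * (real r - 1))"
  have "(\<Sum>y\<in>?V. Qpow p h \<omega> r (Suc t) x y * real (phi r y))
      = (\<Sum>y\<in>?V. \<Sum>z\<in>?V. Qpow p h \<omega> r t x z * (Qker p \<omega> r z y * real (phi r y)))"
    by (simp add: sum_distrib_right mult.assoc)
  also have "\<dots> = (\<Sum>z\<in>?V. Qpow p h \<omega> r t x z * (\<Sum>y\<in>?V. Qker p \<omega> r z y * real (phi r y)))"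
    by (subst sum.swap) (simp add: sum_distrib_left)
  also have "\<dots> \<le> (\<Sum>z\<in>?V. Qpow p h \<omega> r t x z * (real (phi r z) * ?q))"
    by (intro sum_mono mult_left_mono Q_phi r Qpow_nonneg) auto
  also have "\<dots> = ?q * (\<Sum>z\<in>?V. Qpow p h \<omega> r t x z * real (phi r z))"
    by (simp add: sum_distrib_left algebra_simps)
  also have "\<dots> \<le> ?q * (real (phi r x) * ?q ^ t)"
    using Suc r by (intro mult_left_mono) auto
  finally show ?case by (simp add: algebra_simps)
qed

lemma tv_count:
  assumes "2 * card (Reach p \<omega> r x t) < card (Vr p h \<omega> r)"
  shows "tv_dist p h \<omega> r t x > 1 / 4"
proof -
  let ?V = "Vr p h \<omega> r"
  let ?R = "Reach p \<omega> r x t"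
  let ?N = "real (card ?V)"
  have fR: "finite ?R" using Reach_card by blast
  have N: "?N > 0" using assms by simp
  have "(\<Sum>y\<in>?V - ?R. \<bar>Qpow p h \<omega> r t x y - 1 / ?N\<bar>) \<le> (\<Sum>y\<in>?V. \<bar>Qpow p h \<omega> r t x y - 1 / ?N\<bar>)"
    by (rule sum_mono2) (use Vr_finite in auto)
  moreover have "(\<Sum>y\<in>?V - ?R. \<bar>Qpow p h \<omega> r t x y - 1 / ?N\<bar>) = real (card (?V - ?R)) / ?N"
  proof -
    have "(\<Sum>y\<in>?V - ?R. \<bar>Qpow p h \<omega> r t x y - 1 / ?N\<bar>) = (\<Sum>y\<in>?V - ?R. 1 / ?N)"
    proof (rule sum.cong)
      fix y assume "y \<in> ?V - ?R"
      then have "Qpow p h \<omega> r t x y = 0" using Qpow_support by blast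
      then show "\<bar>Qpow p h \<omega> r t x y - 1 / ?N\<bar> = 1 / ?N" using N by simp
    qed simp
    then show ?thesis by simp
  qed
  moreover have "card ?V - card ?R \<le> card (?V - ?R)" using fR by (rule diff_card_le_card_Diff)
  then have "real (card ?V - card ?R) / ?N \<le> real (card (?V - ?R)) / ?N"
    using N by (intro divide_right_mono) auto
  moreover have "real (card ?V - card ?R) / ?N > 1/2"
    using assms N by (simp add: of_nat_diff field_simps)
  ultimately have "(\<Sum>y\<in>?V. \<bar>Qpow p h \<omega> r t x y - 1 / ?N\<bar>) > 1/2" by linarith
  then show ?thesis unfolding tv_dist_def by linarith
qed

lemma tv_set:
  assumes A: "A \<subseteq> Vr p h \<omega> r" and cA: "4 * card A \<le> card (Vr p h \<omega> r)"
    and small: "(\<Sum>y\<in>Vr p h \<omega> r - A. Qpow p h \<omega> r t x y) < 1 / 4"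
    and ne: "Vr p h \<omega> r \<noteq> {}"
  shows "tv_dist p h \<omega> r t x > 1 / 4"
proof -
  let ?V = "Vr p h \<omega> r"
  let ?N = "real (card ?V)"
  have N: "?N > 0" using ne Vr_finite card_gt_0_iff by auto
  have "(\<Sum>y\<in>?V - A. 1 / ?N - Qpow p h \<omega> r t x y) \<le> (\<Sum>y\<in>?V - A. \<bar>Qpow p h \<omega> r t x y - 1 / ?N\<bar>)"
    by (rule sum_mono) auto
  also have "\<dots> \<le> (\<Sum>y\<in>?V. \<bar>Qpow p h \<omega> r t x y - 1 / ?N\<bar>)"
    by (rule sum_mono2) (use Vr_finite in auto)
  finally have "real (card (?V - A)) / ?N - (\<Sum>y\<in>?V - A. Qpow p h \<omega> r t x y) \<le> (\<Sum>y\<in>?V. \<bar>Qpow p h \<omega> r t x y - 1 / ?N\<bar>)"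
    by (simp add: sum_subtractf)
  moreover have cd: "card (?V - A) = card ?V - card A" using A Vr_finite finite_subset card_Diff_subset by metis
  moreover have "real (card ?V - card A) / ?N \<ge> 3 / 4"
    using cA N by (simp add: of_nat_diff field_simps)
  then have "real (card (?V - A)) / ?N \<ge> 3 / 4" by (simp only: cd)
  ultimately have "3 / 4 - 1 / 4 < (\<Sum>y\<in>?V. \<bar>Qpow p h \<omega> r t x y - 1 / ?N\<bar>)"
    using small by linarith
  then show ?thesis unfolding tv_dist_def by linarith
qed

lemma markov:
  assumes x: "x \<in> Vr p h \<omega> r" and r: "r \<ge> 2"
  shows "(\<Sum>y\<in>{y \<in> Vr p h \<omega> r. K < phi r y}. Qpow p h \<omega> r t x y)
     \<le> real (phi r x) * (1 + 1 / (2 * (real r - 1))) ^ t / (real K + 1)"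
proof -
  let ?V = "Vr p h \<omega> r"
  let ?B = "{y \<in> ?V. K < phi r y}"
  have "(\<Sum>y\<in>?B. Qpow p h \<omega> r t x y) \<le> (\<Sum>y\<in>?B. Qpow p h \<omega> r t x y * real (phi r y) / (real K + 1))"
  proof (rule sum_mono)
    fix y assume "y \<in> ?B"
    then have "real (phi r y) \<ge> real K + 1" by simp
    then have "Qpow p h \<omega> r t x y * (real K + 1) \<le> Qpow p h \<omega> r t x y * real (phi r y)"
      using Qpow_nonneg[of p h \<omega> r t x y] by (rule mult_left_mono)
    then show "Qpow p h \<omega> r t x y \<le> Qpow p h \<omega> r t x y * real (phi r y) / (real K + 1)"
      by (simp add: pos_le_divide_eq)
  qed
  also have "\<dots> \<le> (\<Sum>y\<in>?V. Qpow p h \<omega> r t x y * real (phi r y) / (real K + 1))"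
    by (rule sum_mono2) (use Vr_finite Qpow_nonneg in auto)
  also have "\<dots> = (\<Sum>y\<in>?V. Qpow p h \<omega> r t x y * real (phi r y)) / (real K + 1)"
    by (simp add: sum_divide_distrib)
  also have "\<dots> \<le> real (phi r x) * (1 + 1 / (2 * (real r - 1))) ^ t / (real K + 1)"
    by (intro divide_right_mono E_bound x r) auto
  finally show ?thesis .
qed

end


lemma sum_ecount2: fixes h r :: nat assumes "h < r" shows "(h + 1) * (r - h - 1) \<le> (\<Sum>i<r. ecount h i)"
proof -
  have "(\<Sum>i\<in>{h<..<r}. ecount h i) \<le> (\<Sum>i<r. ecount h i)"
    by (rule sum_mono2) auto
  moreover have "(\<Sum>i\<in>{h<..<r}. ecount h i) = (\<Sum>i\<in>{h<..<r}. h + 1)"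
    by (rule sum.cong) (auto simp: ecount_def)
  moreover have "card {h<..<r} = r - h - 1" by simp
  ultimately show ?thesis by (simp add: mult.commute)
qed

definition Asets :: "nat \<Rightarrow> nat \<Rightarrow> nat \<Rightarrow> nat set \<Rightarrow> (nat \<Rightarrow> helem) set" where
  "Asets p h r S = {g. (\<forall>i<r. g i \<in> (if i \<in> S then Hset p h else {hone})) \<and> (\<forall>i\<ge>r. g i = hone)}"

context heis begin

lemma Asets_card: assumes "S \<subseteq> {..<r}"
  shows "finite (Asets p h r S)" "card (Asets p h r S) = (p ^ (h + 1)) ^ card S"
proof -
  have c: "finite (Asets p h r S) \<and> card (Asets p h r S) = (\<Prod>i<r. card (if i \<in> S then Hset p h else {hone}))"
    using card_funs[of r "\<lambda>i. if i \<in> S then Hset p h else {hone}" hone] Hset_card(1)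
    unfolding Asets_def by simp
  then show "finite (Asets p h r S)" by simp
  have "(\<Prod>i<r. card (if i \<in> S then Hset p h else {hone})) = (\<Prod>i<r. if i \<in> S then p ^ (h + 1) else 1)"
    by (rule prod.cong) (auto simp: Hset_card(2))
  also have "\<dots> = (\<Prod>i\<in>{..<r} \<inter> S. p ^ (h + 1))"
    by (simp add: prod.If_cases)
  also have "{..<r} \<inter> S = S" using assms by auto
  finally show "card (Asets p h r S) = (p ^ (h + 1)) ^ card S" using c by simp
qed

lemma A_card:
  "card {y \<in> Vr p h \<omega> r. phi r y \<le> K} \<le> 2 ^ r * (p ^ (h + 1)) ^ K"
proof -
  let ?A = "{y \<in> Vr p h \<omega> r. phi r y \<le> K}"
  let ?SS = "{S. S \<subseteq> {..<r} \<and> card S \<le> K}"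
  have sub: "?A \<subseteq> (\<Union>S\<in>?SS. Asets p h r S)"
  proof
    fix y assume y: "y \<in> ?A"
    let ?S = "{i. i < r \<and> y i \<noteq> hone}"
    have "?S \<in> ?SS" using y by (auto simp: phi_def)
    moreover have "y \<in> Asets p h r ?S" using y by (auto simp: Asets_def Vr_def)
    ultimately show "y \<in> (\<Union>S\<in>?SS. Asets p h r S)" by blast
  qed
  have finSS: "finite ?SS" by (rule finite_subset[of _ "Pow {..<r}"]) auto
  have "card ?A \<le> card (\<Union>S\<in>?SS. Asets p h r S)"
    by (rule card_mono) (use finSS Asets_card(1) sub in auto)
  also have "\<dots> \<le> (\<Sum>S\<in>?SS. card (Asets p h r S))"
    by (rule card_UN_le[OF finSS])
  also have "\<dots> \<le> (\<Sum>S\<in>?SS. (p ^ (h + 1)) ^ K)"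
  proof (rule sum_mono)
    fix S assume S: "S \<in> ?SS"
    have "1 \<le> p ^ (h + 1)" using ppos by simp
    then have "(p ^ (h + 1)) ^ card S \<le> (p ^ (h + 1)) ^ K" using S by (intro power_increasing) auto
    then show "card (Asets p h r S) \<le> (p ^ (h + 1)) ^ K" using S Asets_card(2) by simp
  qed
  also have "\<dots> = card ?SS * (p ^ (h + 1)) ^ K" by simp
  also have "card ?SS \<le> card (Pow {..<r})" by (rule card_mono) auto
  then have "card ?SS * (p ^ (h + 1)) ^ K \<le> 2 ^ r * (p ^ (h + 1)) ^ K" by (simp add: card_Pow)
  finally show ?thesis .
qed

lemma phi_x0: "phi r (x0 h) \<le> h + 1"
proof -
  have "{i. i < r \<and> x0 h i \<noteq> hone} \<subseteq> {..h}" by (auto simp: x0_def split: if_splits)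
  then have "card {i. i < r \<and> x0 h i \<noteq> hone} \<le> card {..h}" by (intro card_mono) auto
  then show ?thesis by (simp add: phi_def)
qed

end


lemma pow_ineq: fixes s r :: nat assumes "r + 8 \<le> 4 * s" shows "4 * 2 ^ r \<le> (27::nat) ^ s"
proof -
  have "4 * 2 ^ r \<le> (2::nat) ^ (r + 8)" by (simp add: power_add)
  also have "\<dots> \<le> 2 ^ (4 * s)" using assms by (intro power_increasing) auto
  also have "\<dots> = 16 ^ s" by (simp add: power_mult)
  also have "\<dots> \<le> 27 ^ s" by (intro power_mono) auto
  finally show ?thesis .
qed

context heis begin

lemma infect_case:
  assumes h2: "2 \<le> h" and hr: "h < r" and rbig: "12 ^ 8 \<le> r" and sq: "(h + 1) ^ 2 \<le> r"
    and t: "real t < real r * ln (real r) / 32"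
  shows "tv_dist p h \<omega> r t (x0 h) > 1 / 4"
proof -
  define K where "K = r div 2"
  define A where "A = {y \<in> Vr p h \<omega> r. phi r y \<le> K}"
  define P where "P = p ^ (h + 1)"
  have r2: "r \<ge> 2" using rbig by simp
  have x0V: "x0 h \<in> Vr p h \<omega> r" using x0_Vr[OF hr] .
  have r48: "4 * (h + 1) + 8 \<le> r"
  proof (cases "h + 1 \<ge> 8")
    case True
    then have "4 * (h + 1) + 8 \<le> (h + 1) * (h + 1)" by (intro order_trans[OF _ mult_right_mono[of 8 "h+1" "h+1"]]) auto
    then show ?thesis using sq by (simp add: power2_eq_square)
  next
    case False then show ?thesis using rbig by simp
  qed
  define s where "s = r - h - 1 - K"
  have Ks: "r - h - 1 = K + s" using r48 by (simp add: s_def K_def)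
  have s4: "r + 8 \<le> 4 * s" using r48 by (simp add: s_def K_def)
  have P27: "27 \<le> P"
  proof -
    have "3 ^ 3 \<le> p ^ 3" using p3 by (intro power_mono) auto
    also have "\<dots> \<le> p ^ (h + 1)" using h2 ppos by (intro power_increasing) auto
    finally show ?thesis by (simp add: P_def)
  qed
  have cardA: "4 * card A \<le> card (Vr p h \<omega> r)"
  proof -
    have "4 * card A \<le> 4 * (2 ^ r * P ^ K)" using A_card[of r K] by (simp add: A_def P_def)
    also have "\<dots> = (4 * 2 ^ r) * P ^ K" by simp
    also have "\<dots> \<le> 27 ^ s * P ^ K" using pow_ineq[OF s4] by simp
    also have "\<dots> \<le> P ^ s * P ^ K" using P27 by (intro mult_right_mono power_mono) auto
    also have "\<dots> = P ^ (r - h - 1)" using Ks by (simp add: power_add mult.commute)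
    also have "\<dots> = p ^ ((h + 1) * (r - h - 1))" unfolding P_def by (rule power_mult[symmetric])
    also have "\<dots> \<le> p ^ (\<Sum>i<r. ecount h i)" using sum_ecount2[OF hr] ppos by (intro power_increasing) auto
    also have "\<dots> \<le> card (Vr p h \<omega> r)" using Vr_card_lb[OF hr] .
    finally show ?thesis .
  qed
  have VA: "Vr p h \<omega> r - A = {y \<in> Vr p h \<omega> r. K < phi r y}" by (auto simp: A_def)
  define a where "a = 1 / (2 * (real r - 1))"
  have rr: "real r \<ge> 12 ^ 8" using rbig by (metis of_nat_le_iff of_nat_numeral of_nat_power)
  have rpos: "real r > 0" using rr by simp
  have m: "(\<Sum>y\<in>Vr p h \<omega> r - A. Qpow p h \<omega> r t (x0 h) y) \<le> real (phi r (x0 h)) * (1 + a) ^ t / (real K + 1)"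
    unfolding VA a_def by (rule markov[OF x0V r2])
  have "(1 + a) ^ t \<le> exp a ^ t" using exp_ge_add_one_self[of a] a_def r2 by (intro power_mono) auto
  also have "\<dots> = exp (real t * a)" by (simp add: exp_of_nat_mult)
  also have "\<dots> \<le> exp (ln (real r) / 32)"
  proof -
    have "2 * (real r - 1) \<ge> real r" using r2 by simp
    have "2 \<le> real r" using r2 by simp
    then have rt: "real t * 2 \<le> real r * real t"
      using mult_right_mono[of 2 "real r" "real t"] by (simp add: mult.commute)
    have "real t * a \<le> real t / real r" unfolding a_def using rpos r2 rt by (simp add: field_simps)
    also have "\<dots> \<le> ln (real r) / 32" using t rpos by (simp add: field_simps)
    finally show ?thesis by simp
  qed
  finally have qt: "(1 + a) ^ t \<le> exp (ln (real r) / 32)" .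
  have key: "8 * real (h + 1) * exp (ln (real r) / 32) \<le> real r"
  proof -
    have l1: "2 * ln (real (h + 1)) \<le> ln (real r)"
    proof -
      have "real ((h + 1) ^ 2) \<le> real r" using sq by (simp only: of_nat_le_iff)
      then have "ln (real (h + 1) ^ 2) \<le> ln (real r)" by (intro ln_mono) auto
      then show ?thesis by (simp add: ln_realpow)
    qed
    have l2: "32 * ln 8 \<le> 15 * ln (real r)"
    proof -
      have "(8::real) ^ 32 \<le> (12 ^ 8) ^ 15" by simp
      also have "\<dots> \<le> real r ^ 15" using rr by (intro power_mono) auto
      finally have "ln ((8::real) ^ 32) \<le> ln (real r ^ 15)" by (intro ln_mono) auto
      then show ?thesis unfolding ln_realpow by simp
    qed
    have "ln (8 * real (h + 1) * exp (ln (real r) / 32)) = ln 8 + ln (real (h + 1)) + ln (real r) / 32"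
    proof -
      have X: "real (h + 1) > 0" by simp
      have "ln (8 * real (h + 1) * exp (ln (real r) / 32)) = ln (8 * real (h + 1)) + ln (exp (ln (real r) / 32))"
        using X by (intro ln_mult_pos) auto
      also have "ln (8 * real (h + 1)) = ln 8 + ln (real (h + 1))" using X by (intro ln_mult_pos) auto
      finally show ?thesis by simp
    qed
    also have "\<dots> \<le> ln (real r)" using l1 l2 by linarith
    finally show ?thesis using rpos by (subst (asm) ln_le_cancel_iff) auto
  qed
  have Kr: "real r / 2 < real K + 1" unfolding K_def by linarith
  have "(\<Sum>y\<in>Vr p h \<omega> r - A. Qpow p h \<omega> r t (x0 h) y) \<le> real (h + 1) * exp (ln (real r) / 32) / (real K + 1)"
  proof -
    have "real (phi r (x0 h)) * (1 + a) ^ t \<le> real (h + 1) * exp (ln (real r) / 32)"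
      using phi_x0[of r] qt a_def r2 by (intro mult_mono) auto
    then show ?thesis using m by (smt (verit) divide_right_mono of_nat_0_le_iff)
  qed
  also have "\<dots> < 1 / 4"
  proof -
    have "4 * (real (h + 1) * exp (ln (real r) / 32)) \<le> real r / 2" using key by (simp add: algebra_simps)
    then have "4 * (real (h + 1) * exp (ln (real r) / 32)) < real K + 1" using Kr by linarith
    then show ?thesis by (simp add: field_simps)
  qed
  finally have small: "(\<Sum>y\<in>Vr p h \<omega> r - A. Qpow p h \<omega> r t (x0 h) y) < 1 / 4" .
  show ?thesis
    by (rule tv_set[OF _ cardA small]) (use x0V in \<open>auto simp: A_def\<close>)
qed

end


lemma lin_aux: "23 * 3 \<le> 13 * (X::real) - 16 * H \<Longrightarrow> X - H \<le> 2 * F \<Longrightarrow> 1 + X / 16 \<le> F * (2 / 3)"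
  by linarith

context heis begin

lemma ln_p_lb: "ln (real p) \<ge> 2 / 3"
proof -
  have pp: "real p \<ge> 3" using p3 by simp
  have "ln (1 / real p) \<le> 1 / real p - 1" using pp by (intro ln_le_minus_one) auto
  then have "ln (real p) \<ge> 1 - 1 / real p" using pp by (simp add: ln_div)
  moreover have "1 / real p \<le> 1 / 3" using pp by (simp add: field_simps)
  ultimately show ?thesis by linarith
qed

lemma count_case:
  assumes h2: "2 \<le> h" and hr: "h < r" and r3: "3 \<le> r"
    and t: "real t * (16 * (ln (3 * real p) + 2)) < real r * real (h + 1) / ln (exp 1 * real r)"
  shows "tv_dist p h \<omega> r t (x0 h) > 1 / 4"
proof -
  define D where "D = ln (3 * real p) + 2"
  define L where "L = ln (exp 1 * real r)"
  define b where "b = 1 + 2 * (r * r * p)"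
  define E where "E = (\<Sum>i<r. ecount h i)"
  have rpos: "real r > 0" using r3 by simp
  have pp: "real p \<ge> 3" using p3 by simp
  have L: "L = 1 + ln (real r)" unfolding L_def using rpos by (simp add: ln_mult_pos)
  have lr: "ln (real r) \<ge> 0" using r3 by simp
  have L1: "L \<ge> 1" using L lr by simp
  have lp3: "ln (3 * real p) \<ge> 0" using pp by simp
  have Dpos: "D > 0" unfolding D_def using lp3 by simp
  have bpos: "real b > 0" unfolding b_def by (simp only: of_nat_0_less_iff)
  have lnb: "ln (real b) \<le> D * L"
  proof -
    have "real b \<le> 3 * real p * real r ^ 2"
    proof -
      have "b \<le> 3 * p * r ^ 2" using ppos r3 by (simp add: b_def power2_eq_square)
      then show ?thesis by (metis of_nat_le_iff of_nat_mult of_nat_numeral of_nat_power)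
    qed
    then have "ln (real b) \<le> ln (3 * real p * real r ^ 2)" using bpos by (intro ln_mono) auto
    also have "\<dots> = ln (3 * real p) + 2 * ln (real r)"
      using rpos pp by (simp add: ln_mult_pos ln_realpow)
    also have "\<dots> \<le> ln (3 * real p) * L + 2 * L"
      using L lp3 L1 mult_left_mono[OF L1 lp3] by simp
    also have "\<dots> = D * L" by (simp add: D_def algebra_simps)
    finally show ?thesis .
  qed
  have Lpos: "L > 0" using L1 by simp
  have tb: "real t * ln (real b) < real r * real (h + 1) / 16"
  proof -
    have "real t * ln (real b) \<le> real t * (D * L)" using lnb by (intro mult_left_mono) auto
    also have "\<dots> = (real t * (16 * D)) * L / 16" by simp
    also have "\<dots> < (real r * real (h + 1) / L) * L / 16"
      using t Lpos unfolding D_def L_def by (intro divide_strict_right_mono mult_strict_right_mono) auto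
    also have "\<dots> = real r * real (h + 1) / 16" using Lpos by simp
    finally show ?thesis .
  qed
  have E: "real (h + 1) * (real r - 1) \<le> 2 * real E"
  proof -
    have "(h + 1) * (r - 1) \<le> 2 * E" unfolding E_def by (rule sum_ecount[OF hr])
    then have "real ((h + 1) * (r - 1)) \<le> real (2 * E)" by (simp only: of_nat_le_iff)
    moreover have r1: "real (r - 1) = real r - 1" using r3 by (simp add: of_nat_diff)
    ultimately show ?thesis by (simp only: of_nat_mult r1 of_nat_numeral)
  qed
  have "ln (2 * real b ^ t) = ln 2 + real t * ln (real b)"
  proof -
    have "ln (2 * real b ^ t) = ln 2 + ln (real b ^ t)" using bpos by (intro ln_mult_pos) auto
    then show ?thesis by (simp only: ln_realpow)
  qed
  also have "\<dots> < 1 + real r * real (h + 1) / 16" using tb ln_2_less_1 by linarith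
  also have "\<dots> \<le> real E * (2 / 3)"
  proof -
    have "real (h + 1) \<ge> 3" using h2 by simp
    have "real r \<ge> 3" using r3 by simp
    then have "(13 * real r - 16) * real (h + 1) \<ge> 23 * 3"
      using \<open>real (h + 1) \<ge> 3\<close> by (intro mult_mono) auto
    moreover
    define X where "X = real r * real (h + 1)"
    have e1: "(13 * real r - 16) * real (h + 1) = 13 * X - 16 * real (h + 1)" unfolding X_def by (simp add: algebra_simps)
    have e2: "real (h + 1) * (real r - 1) = X - real (h + 1)" unfolding X_def by (simp add: algebra_simps)
    ultimately have f1: "23 * 3 \<le> 13 * X - 16 * real (h + 1)" using e1 by simp
    have f2: "X - real (h + 1) \<le> 2 * real E" using E unfolding e2 .
    have "1 + X / 16 \<le> real E * (2 / 3)" by (rule lin_aux[OF f1 f2])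
    then show ?thesis unfolding X_def .
  qed
  also have "\<dots> \<le> real E * ln (real p)" using ln_p_lb by (intro mult_left_mono) auto
  also have "\<dots> = ln (real p ^ E)" by (simp only: ln_realpow)
  finally have "ln (2 * real b ^ t) < ln (real p ^ E)" .
  moreover have "0 < 2 * real b ^ t" using bpos by simp
  moreover have "0 < real p ^ E" using pp by simp
  ultimately have "2 * real b ^ t < real p ^ E" by (simp only: ln_less_cancel_iff)
  then have "real (2 * b ^ t) < real (p ^ E)" by (simp only: of_nat_mult of_nat_power of_nat_numeral)
  then have "2 * b ^ t < p ^ E" by (simp only: of_nat_less_iff)
  moreover have "card (Reach p \<omega> r (x0 h) t) \<le> b ^ t" using Reach_card unfolding b_def by blast
  moreover have "p ^ E \<le> card (Vr p h \<omega> r)" unfolding E_def by (rule Vr_card_lb[OF hr])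
  ultimately have "2 * card (Reach p \<omega> r (x0 h) t) < card (Vr p h \<omega> r)" by linarith
  then show ?thesis by (rule tv_count)
qed

end


lemma log_sq_bound:
  fixes r H :: real
  assumes r: "12 ^ 8 \<le> r" and H: "r < H ^ 2" and H0: "0 \<le> H"
  shows "ln r * (1 + ln r) \<le> H"
proof -
  define u where "u = r powr (1 / 8)"
  have rpos: "r > 0" using r by simp
  have u8: "u ^ 8 = r"
  proof -
    have "u ^ 8 = r powr (of_nat 8 * (1 / 8))" unfolding u_def using rpos by (intro powr_power) auto
    also have "(of_nat 8 * (1 / 8) :: real) = 1" by simp
    finally show ?thesis using rpos by (simp add: powr_one)
  qed
  have u12: "u \<ge> 12"
  proof -
    have "(12 ^ 8 :: real) powr (1 / 8) \<le> r powr (1 / 8)" using r by (intro powr_mono2) auto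
    moreover have "(12 ^ 8 :: real) powr (1 / 8) = 12"
    proof -
      have e: "(12::real) powr (real 8) = 12 ^ 8" by (rule powr_realpow) simp
      have "((12::real) powr (real 8)) powr (1 / 8) = 12 powr (real 8 * (1 / 8))" by (rule powr_powr)
      also have "(real 8 * (1 / 8) :: real) = 1" by simp
      finally show ?thesis unfolding e by simp
    qed
    ultimately show ?thesis by (simp add: u_def)
  qed
  have lnr: "ln r \<le> 8 * u"
  proof -
    have "ln r \<le> r powr (1 / 8) / (1 / 8)" using r by (intro ln_powr_bound) auto
    then show ?thesis by (simp add: u_def)
  qed
  have lr0: "ln r \<ge> 0" using r by simp
  have "ln r * (1 + ln r) \<le> (8 * u) * (1 + 8 * u)"
    using lnr lr0 u12 by (intro mult_mono) auto
  also have "\<dots> \<le> (8 * u) * (9 * u)" using u12 by (intro mult_left_mono) auto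
  also have "\<dots> = 72 * u ^ 2" by (simp add: power2_eq_square)
  also have "\<dots> \<le> u ^ 2 * u ^ 2"
  proof -
    have "12 * 12 \<le> u * u" using u12 by (intro mult_mono) auto
    then have "72 \<le> u ^ 2" by (simp add: power2_eq_square)
    then show ?thesis by (intro mult_right_mono) auto
  qed
  also have "\<dots> = u ^ 4" by (simp add: power_add[symmetric])
  also have "\<dots> \<le> H"
  proof -
    have "(u ^ 4) ^ 2 < H ^ 2" using u8 H by (simp add: power_mult[symmetric])
    then have "u ^ 4 < H" using H0 by (rule power_less_imp_less_base)
    then show ?thesis by simp
  qed
  finally show ?thesis .
qed

context heis begin

lemma main_bound:
  assumes h2: "2 \<le> h" and hr: "h < r" and rbig: "12 ^ 8 \<le> r"
  shows "mix_time p h \<omega> r \<ge> ereal (1 / (16 * (ln (3 * real p) + 2)) *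
           max (real r * ln (real r)) (real r * (real h + 1) / ln (exp 1 * real r)))"
proof -
  define D where "D = ln (3 * real p) + 2"
  define c where "c = 1 / (16 * D)"
  define A1 where "A1 = real r * ln (real r)"
  define A2 where "A2 = real r * (real h + 1) / ln (exp 1 * real r)"
  have pp: "real p \<ge> 3" using p3 by simp
  have Dge: "D \<ge> 2" unfolding D_def using pp by simp
  have cpos: "c > 0" unfolding c_def using Dge by simp
  have c32: "c \<le> 1 / 32" unfolding c_def using Dge by (simp add: field_simps)
  have rr: "real r \<ge> 12 ^ 8" using rbig by (metis of_nat_le_iff of_nat_numeral of_nat_power)
  have A1pos: "A1 \<ge> 0" unfolding A1_def using rr by simp
  have r3: "3 \<le> r" using rbig by simp
  have x0V: "x0 h \<in> Vr p h \<omega> r" using x0_Vr[OF hr] .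
  have key: "real t \<ge> c * max A1 A2" if all: "\<forall>x\<in>Vr p h \<omega> r. tv_dist p h \<omega> r t x \<le> 1 / 4" for t
  proof (rule ccontr)
    assume "\<not> real t \<ge> c * max A1 A2"
    then have tlt: "real t < c * max A1 A2" by simp
    have tv0: "tv_dist p h \<omega> r t (x0 h) \<le> 1 / 4" using all x0V by blast
    show False
    proof (cases "(h + 1) ^ 2 \<le> r \<and> real t < c * A1")
      case True
      then have "real t < real r * ln (real r) / 32"
        using c32 A1pos mult_right_mono[OF c32 A1pos] unfolding A1_def by simp
      then have "tv_dist p h \<omega> r t (x0 h) > 1 / 4" using infect_case[OF h2 hr rbig] True by blast
      then show False using tv0 by simp
    next
      case False
      have tA2: "real t < c * A2"
      proof (cases "(h + 1) ^ 2 \<le> r")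
        case True
        then have "\<not> real t < c * A1" using False by simp
        then show ?thesis using tlt by (auto simp: max_def split: if_splits)
      next
        case F2: False
        have "A1 \<le> A2"
        proof -
          have Lpos: "ln (exp 1 * real r) = 1 + ln (real r)" using rr by (simp add: ln_mult_pos)
          have "ln (real r) * (1 + ln (real r)) \<le> real h + 1"
          proof (rule log_sq_bound[OF rr])
            have "r < (h + 1) ^ 2" using F2 by simp
            then have "real r < real ((h + 1) ^ 2)" by (simp only: of_nat_less_iff)
            then show "real r < (real h + 1) ^ 2" by (simp add: add.commute)
          qed simp
          moreover have "1 + ln (real r) > 0"
          proof -
            have "ln (real r) \<ge> 0" using rr by simp
            then show ?thesis by linarith
          qed
          ultimately have "ln (real r) \<le> (real h + 1) / (1 + ln (real r))" by (simp add: field_simps)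
          then have "real r * ln (real r) \<le> real r * ((real h + 1) / (1 + ln (real r)))"
            by (intro mult_left_mono) auto
          then show ?thesis unfolding A1_def A2_def Lpos by simp
        qed
        then show ?thesis using tlt by (simp add: max_def)
      qed
      then have "real t * (16 * D) < A2" unfolding c_def using Dge by (simp add: field_simps)
      then have "real t * (16 * (ln (3 * real p) + 2)) < real r * real (h + 1) / ln (exp 1 * real r)"
        unfolding D_def A2_def by (simp add: add.commute)
      then have "tv_dist p h \<omega> r t (x0 h) > 1 / 4" by (rule count_case[OF h2 hr r3])
      then show False using tv0 by simp
    qed
  qed
  show ?thesis
    unfolding mix_time_def
  proof (rule Inf_greatest)
    fix s assume "s \<in> {ereal (real t) |t. \<forall>x\<in>Vr p h \<omega> r. tv_dist p h \<omega> r t x \<le> 1 / 4}"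
    then obtain t where s: "s = ereal (real t)" and all: "\<forall>x\<in>Vr p h \<omega> r. tv_dist p h \<omega> r t x \<le> 1 / 4" by blast
    have "c * max A1 A2 \<le> real t" using key[OF all] .
    then show "ereal (1 / (16 * (ln (3 * real p) + 2)) *
           max (real r * ln (real r)) (real r * (real h + 1) / ln (exp 1 * real r))) \<le> s"
      unfolding s c_def D_def A1_def A2_def by simp
  qed
qed

end


theorem theorem4p3:
  fixes p :: nat
  assumes "prime p" and "odd p"
  shows "\<exists>c::real. c > 0 \<and> (\<exists>r0::nat.
     \<forall>m::nat. \<forall>\<omega> r. m \<ge> 1 \<longrightarrow> symplectic_form p (2*m) \<omega> \<longrightarrow>
       r \<ge> max (2*m + 1) r0 \<longrightarrow>
       mix_time p (2*m) \<omega> r \<ge>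
         ereal (c * max (real r * ln (real r))
                        (real r * (real (2*m) + 1) / ln (exp 1 * real r))))"
proof -
  define c where "c = 1 / (16 * (ln (3 * real p) + 2))"
  have p1: "real p \<ge> 1" using assms(1) prime_ge_1_nat by simp
  have "ln (3 * real p) \<ge> 0" using p1 by simp
  then have cpos: "c > 0" unfolding c_def by simp
  have main: "\<forall>m::nat. \<forall>\<omega> r. m \<ge> 1 \<longrightarrow> symplectic_form p (2*m) \<omega> \<longrightarrow>
       r \<ge> max (2*m + 1) (12 ^ 8) \<longrightarrow>
       mix_time p (2*m) \<omega> r \<ge>
         ereal (c * max (real r * ln (real r))
                        (real r * (real (2*m) + 1) / ln (exp 1 * real r)))"
  proof (intro allI impI)
    fix m :: nat and \<omega> r
    assume m: "m \<ge> 1" and sf: "symplectic_form p (2*m) \<omega>" and r: "r \<ge> max (2*m + 1) (12 ^ 8)"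
    interpret heis p "2*m" \<omega> using assms sf by unfold_locales
    have "mix_time p (2*m) \<omega> r \<ge> ereal (1 / (16 * (ln (3 * real p) + 2)) *
           max (real r * ln (real r)) (real r * (real (2*m) + 1) / ln (exp 1 * real r)))"
      by (rule main_bound) (use m r in auto)
    then show "mix_time p (2*m) \<omega> r \<ge>
         ereal (c * max (real r * ln (real r))
                        (real r * (real (2*m) + 1) / ln (exp 1 * real r)))"
      unfolding c_def .
  qed
  show ?thesis using cpos main by blast
qed


end
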